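(* Let $S=\mathcal{M}[K,G,\Lambda;P]$ be a Rees matrix semigroup. If $|K|>1$ or $|\Lambda|>1$, then $\sigma_s(S)=2$. If $|K|=|\Lambda|=1$, then $S$ is a group.
   Context: For a group $G$, nonempty sets $K,\Lambda$ and a $\Lambda\times K$ matrix $P=(p_{\lambda,\kappa})$ with entries in $G$, the Rees matrix semigroup $\mathcal{M}[K,G,\Lambda;P]$ is the set $K\times G\times\Lambda$ with product $(\kappa,g,\lambda)(\mu,h,\nu)=(\kappa,gp_{\lambda,\mu}h,\nu)$. $\sigma_s(S)$ is the least positive integer $n$ such that $S$ is the union of $n$ proper subsemigroups, or $\infty$ if none exists. *)

theory Defs
  imports "HOL-Algebra.Group" "HOL-Library.Extended_Nat"
begin

text \<open>Rees matrix semigroup M[K,G,L;P]: carrier K x G x L, with the sandwich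
  matrix P indexed by (lambda, kappa), i.e. P :: 'l => 'k => 'g.\<close>

definition rees_carrier :: "'k set \<Rightarrow> ('g, 'b) monoid_scheme \<Rightarrow> 'l set \<Rightarrow> ('k \<times> 'g \<times> 'l) set" where
  "rees_carrier K G L = K \<times> carrier G \<times> L"

definition rees_mult :: "('g, 'b) monoid_scheme \<Rightarrow> ('l \<Rightarrow> 'k \<Rightarrow> 'g)
    \<Rightarrow> ('k \<times> 'g \<times> 'l) \<Rightarrow> ('k \<times> 'g \<times> 'l) \<Rightarrow> ('k \<times> 'g \<times> 'l)" where
  "rees_mult G P x y =
     (case x of (k1, g, l1) \<Rightarrow> (case y of (k2, h, l2) \<Rightarrow> (k1, g \<otimes>\<^bsub>G\<^esub> P l1 k2 \<otimes>\<^bsub>G\<^esub> h, l2)))"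

definition subsemigroup_of :: "'a set \<Rightarrow> ('a \<Rightarrow> 'a \<Rightarrow> 'a) \<Rightarrow> 'a set \<Rightarrow> bool" where
  "subsemigroup_of S f T \<longleftrightarrow> T \<noteq> {} \<and> T \<subseteq> S \<and> (\<forall>x\<in>T. \<forall>y\<in>T. f x y \<in> T)"

definition covered_by_proper_subsemigroups :: "'a set \<Rightarrow> ('a \<Rightarrow> 'a \<Rightarrow> 'a) \<Rightarrow> nat \<Rightarrow> bool" where
  "covered_by_proper_subsemigroups S f n \<longleftrightarrow>
     (\<exists>F. finite F \<and> card F = n \<and> (\<forall>T\<in>F. subsemigroup_of S f T \<and> T \<subset> S) \<and> \<Union>F = S)"

definition sigma_s :: "'a set \<Rightarrow> ('a \<Rightarrow> 'a \<Rightarrow> 'a) \<Rightarrow> enat" where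
  "sigma_s S f =
     (if \<exists>n. 0 < n \<and> covered_by_proper_subsemigroups S f n
      then enat (LEAST n. 0 < n \<and> covered_by_proper_subsemigroups S f n)
      else \<infinity>)"

end

theory Submission
  imports Defs
begin

lemma rm_simp: "rees_mult G P (k1,g,l1) (k2,h,l2) = (k1, g \<otimes>\<^bsub>G\<^esub> P l1 k2 \<otimes>\<^bsub>G\<^esub> h, l2)"
  by (simp add: rees_mult_def)

lemma sub_rect:
  assumes "group G" and "\<forall>l\<in>L. \<forall>k\<in>K. P l k \<in> carrier G"
    and "A \<subseteq> K" "B \<subseteq> L" "A \<noteq> {}" "B \<noteq> {}"
  shows "subsemigroup_of (rees_carrier K G L) (rees_mult G P) (A \<times> carrier G \<times> B)"
  unfolding subsemigroup_of_def
proof (intro conjI ballI)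
  interpret G: group G by fact
  show "A \<times> carrier G \<times> B \<noteq> {}" using assms(5,6) by blast
  show "A \<times> carrier G \<times> B \<subseteq> rees_carrier K G L" using assms(3,4) by (auto simp: rees_carrier_def)
  fix x y assume x: "x \<in> A \<times> carrier G \<times> B" and y: "y \<in> A \<times> carrier G \<times> B"
  obtain k1 g l1 where X: "x = (k1,g,l1)" "k1 \<in> A" "g \<in> carrier G" "l1 \<in> B" using x by blast
  obtain k2 h l2 where Y: "y = (k2,h,l2)" "k2 \<in> A" "h \<in> carrier G" "l2 \<in> B" using y by blast
  have "P l1 k2 \<in> carrier G" using assms(2-4) X Y by blast
  then show "rees_mult G P x y \<in> A \<times> carrier G \<times> B"
    using X Y by (simp add: rm_simp)
qed

lemma sigma_two:
  assumes T1: "subsemigroup_of S f A" "A \<subset> S"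
    and T2: "subsemigroup_of S f B" "B \<subset> S"
    and AB: "A \<inter> B = {}" "A \<union> B = S"
  shows "sigma_s S f = 2"
proof -
  have ne: "A \<noteq> B" using T1 AB unfolding subsemigroup_of_def by blast
  have c2: "covered_by_proper_subsemigroups S f 2"
    unfolding covered_by_proper_subsemigroups_def
    by (rule exI[of _ "{A,B}"]) (use T1 T2 AB ne in auto)
  have n1: "\<not> covered_by_proper_subsemigroups S f 1"
    unfolding covered_by_proper_subsemigroups_def
    by (auto simp: card_Suc_eq)
  have "(LEAST n. 0 < n \<and> covered_by_proper_subsemigroups S f n) = 2"
  proof (rule Least_equality)
    show "0 < (2::nat) \<and> covered_by_proper_subsemigroups S f 2" using c2 by simp
  next
    fix y :: nat assume "0 < y \<and> covered_by_proper_subsemigroups S f y"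
    with n1 show "2 \<le> y" by (cases y; cases "y - 1") auto
  qed
  thus ?thesis unfolding sigma_s_def using c2
    by (metis enat_numeral zero_less_numeral)
qed

theorem mainTheorem8:
  fixes K :: "'k set" and L :: "'l set" and G :: "('g, 'b) monoid_scheme"
    and P :: "'l \<Rightarrow> 'k \<Rightarrow> 'g"
  assumes "group G"
    and "K \<noteq> {}" and "L \<noteq> {}"
    and "\<forall>l\<in>L. \<forall>k\<in>K. P l k \<in> carrier G"
  shows "((\<exists>a\<in>K. \<exists>b\<in>K. a \<noteq> b) \<or> (\<exists>a\<in>L. \<exists>b\<in>L. a \<noteq> b)
            \<longrightarrow> sigma_s (rees_carrier K G L) (rees_mult G P) = 2)
       \<and> ((\<exists>k. K = {k}) \<and> (\<exists>l. L = {l})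
            \<longrightarrow> (\<exists>e. group \<lparr>carrier = rees_carrier K G L, mult = rees_mult G P, one = e\<rparr>))"
proof (intro conjI impI)
  interpret G: group G by fact
  have PG: "\<And>l k. l \<in> L \<Longrightarrow> k \<in> K \<Longrightarrow> P l k \<in> carrier G" using assms(4) by blast
  have cne: "carrier G \<noteq> {}" by blast
  assume "(\<exists>a\<in>K. \<exists>b\<in>K. a \<noteq> b) \<or> (\<exists>a\<in>L. \<exists>b\<in>L. a \<noteq> b)"
  then show "sigma_s (rees_carrier K G L) (rees_mult G P) = 2"
  proof
    assume "\<exists>a\<in>K. \<exists>b\<in>K. a \<noteq> b"
    then obtain a b where ab: "a \<in> K" "b \<in> K" "a \<noteq> b" by blast
    obtain c where c: "c \<in> L" using assms(3) by blast
    have o: "\<one>\<^bsub>G\<^esub> \<in> carrier G" by simp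
    show ?thesis
    proof (rule sigma_two[of _ _ "{a} \<times> carrier G \<times> L" "(K - {a}) \<times> carrier G \<times> L"])
      show "subsemigroup_of (rees_carrier K G L) (rees_mult G P) ({a} \<times> carrier G \<times> L)"
        by (rule sub_rect[OF assms(1,4)]) (use ab assms(3) in auto)
      show "subsemigroup_of (rees_carrier K G L) (rees_mult G P) ((K - {a}) \<times> carrier G \<times> L)"
        by (rule sub_rect[OF assms(1,4)]) (use ab assms(3) in auto)
      have "(b, \<one>\<^bsub>G\<^esub>, c) \<in> rees_carrier K G L" "(b, \<one>\<^bsub>G\<^esub>, c) \<notin> {a} \<times> carrier G \<times> L"
        using ab c o by (auto simp: rees_carrier_def)
      then show "{a} \<times> carrier G \<times> L \<subset> rees_carrier K G L"
        using ab unfolding rees_carrier_def by blast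
      have "(a, \<one>\<^bsub>G\<^esub>, c) \<in> rees_carrier K G L" "(a, \<one>\<^bsub>G\<^esub>, c) \<notin> (K - {a}) \<times> carrier G \<times> L"
        using ab c o by (auto simp: rees_carrier_def)
      then show "(K - {a}) \<times> carrier G \<times> L \<subset> rees_carrier K G L"
        using ab unfolding rees_carrier_def by blast
      show "{a} \<times> carrier G \<times> L \<inter> (K - {a}) \<times> carrier G \<times> L = {}" by blast
      show "{a} \<times> carrier G \<times> L \<union> (K - {a}) \<times> carrier G \<times> L = rees_carrier K G L"
        using ab by (auto simp: rees_carrier_def)
    qed
  next
    assume "\<exists>a\<in>L. \<exists>b\<in>L. a \<noteq> b"
    then obtain a b where ab: "a \<in> L" "b \<in> L" "a \<noteq> b" by blast
    obtain c where c: "c \<in> K" using assms(2) by blast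
    have o: "\<one>\<^bsub>G\<^esub> \<in> carrier G" by simp
    show ?thesis
    proof (rule sigma_two[of _ _ "K \<times> carrier G \<times> {a}" "K \<times> carrier G \<times> (L - {a})"])
      show "subsemigroup_of (rees_carrier K G L) (rees_mult G P) (K \<times> carrier G \<times> {a})"
        by (rule sub_rect[OF assms(1,4)]) (use ab assms(2) in auto)
      show "subsemigroup_of (rees_carrier K G L) (rees_mult G P) (K \<times> carrier G \<times> (L - {a}))"
        by (rule sub_rect[OF assms(1,4)]) (use ab assms(2) in auto)
      have "(c, \<one>\<^bsub>G\<^esub>, b) \<in> rees_carrier K G L" "(c, \<one>\<^bsub>G\<^esub>, b) \<notin> K \<times> carrier G \<times> {a}"
        using ab c o by (auto simp: rees_carrier_def)
      then show "K \<times> carrier G \<times> {a} \<subset> rees_carrier K G L"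
        using ab unfolding rees_carrier_def by blast
      have "(c, \<one>\<^bsub>G\<^esub>, a) \<in> rees_carrier K G L" "(c, \<one>\<^bsub>G\<^esub>, a) \<notin> K \<times> carrier G \<times> (L - {a})"
        using ab c o by (auto simp: rees_carrier_def)
      then show "K \<times> carrier G \<times> (L - {a}) \<subset> rees_carrier K G L"
        using ab unfolding rees_carrier_def by blast
      show "K \<times> carrier G \<times> {a} \<inter> K \<times> carrier G \<times> (L - {a}) = {}" by blast
      show "K \<times> carrier G \<times> {a} \<union> K \<times> carrier G \<times> (L - {a}) = rees_carrier K G L"
        using ab by (auto simp: rees_carrier_def)
    qed
  qed
next
  interpret G: group G by fact
  assume "(\<exists>k. K = {k}) \<and> (\<exists>l. L = {l})"
  then obtain k l where kl: "K = {k}" "L = {l}" by blast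
  define p where "p = P l k"
  have p: "p \<in> carrier G" using assms(4) kl p_def by simp
  let ?H = "\<lparr>carrier = rees_carrier K G L, mult = rees_mult G P, one = (k, inv\<^bsub>G\<^esub> p, l)\<rparr>"
  have car: "x \<in> rees_carrier K G L \<longleftrightarrow> (\<exists>g\<in>carrier G. x = (k, g, l))" for x
    by (auto simp: rees_carrier_def kl)
  have mul: "rees_mult G P (k, g, l) (k, h, l) = (k, g \<otimes>\<^bsub>G\<^esub> p \<otimes>\<^bsub>G\<^esub> h, l)" for g h
    by (simp add: rees_mult_def p_def)
  have "group ?H"
  proof (rule groupI)
    fix x y assume "x \<in> carrier ?H" "y \<in> carrier ?H"
    then show "x \<otimes>\<^bsub>?H\<^esub> y \<in> carrier ?H" using p by (auto simp: car mul)
  next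
    show "\<one>\<^bsub>?H\<^esub> \<in> carrier ?H" using p by (simp add: car)
  next
    fix x y z assume "x \<in> carrier ?H" "y \<in> carrier ?H" "z \<in> carrier ?H"
    then show "x \<otimes>\<^bsub>?H\<^esub> y \<otimes>\<^bsub>?H\<^esub> z = x \<otimes>\<^bsub>?H\<^esub> (y \<otimes>\<^bsub>?H\<^esub> z)"
      using p by (auto simp: car mul G.m_assoc)
  next
    fix x assume "x \<in> carrier ?H"
    then show "\<one>\<^bsub>?H\<^esub> \<otimes>\<^bsub>?H\<^esub> x = x"
      using p by (auto simp: car mul)
  next
    fix x assume "x \<in> carrier ?H"
    then obtain g where g: "g \<in> carrier G" "x = (k, g, l)" by (auto simp: car)
    have "(k, inv\<^bsub>G\<^esub> p \<otimes>\<^bsub>G\<^esub> inv\<^bsub>G\<^esub> g \<otimes>\<^bsub>G\<^esub> inv\<^bsub>G\<^esub> p, l) \<otimes>\<^bsub>?H\<^esub> x = \<one>\<^bsub>?H\<^esub>"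
      using p g by (simp add: mul G.m_assoc)
    moreover have "(k, inv\<^bsub>G\<^esub> p \<otimes>\<^bsub>G\<^esub> inv\<^bsub>G\<^esub> g \<otimes>\<^bsub>G\<^esub> inv\<^bsub>G\<^esub> p, l) \<in> carrier ?H"
      using p g by (simp add: car)
    ultimately show "\<exists>y\<in>carrier ?H. y \<otimes>\<^bsub>?H\<^esub> x = \<one>\<^bsub>?H\<^esub>" by blast
  qed
  then show "\<exists>e. group \<lparr>carrier = rees_carrier K G L, mult = rees_mult G P, one = e\<rparr>" by blast
qed

end
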